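(* Let $k\in\mathbb N^+$ and let $G=(V,E)$ be a graph without isolated vertices. If $G$ contains an independent set of size $(k-1)^2+1$, then $G$ has a $k$-edge induced subgraph.
   Context: All graphs are simple (finite, nonempty vertex set, undirected, no loops or multiple edges). A vertex is isolated if it has degree $0$. A $k$-edge induced subgraph of $G$ is an induced subgraph $G[S]$ ($S\neq\emptyset$) with exactly $k$ edges. *)

theory Defs
  imports Main
begin

definition simple_graph :: "'a set \<Rightarrow> 'a set set \<Rightarrow> bool" where
  "simple_graph V E \<longleftrightarrow> finite V \<and> V \<noteq> {} \<and> (\<forall>e\<in>E. e \<subseteq> V \<and> card e = 2)"

definition degree :: "'a set set \<Rightarrow> 'a \<Rightarrow> nat" where
  "degree E v = card {e \<in> E. v \<in> e}"

definition isolated :: "'a set set \<Rightarrow> 'a \<Rightarrow> bool" where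
  "isolated E v \<longleftrightarrow> degree E v = 0"

definition independent_set :: "'a set \<Rightarrow> 'a set set \<Rightarrow> 'a set \<Rightarrow> bool" where
  "independent_set V E I \<longleftrightarrow> I \<subseteq> V \<and> (\<forall>e\<in>E. \<not> e \<subseteq> I)"

definition induced_edges :: "'a set set \<Rightarrow> 'a set \<Rightarrow> 'a set set" where
  "induced_edges E S = {e \<in> E. e \<subseteq> S}"

definition has_k_edge_induced_subgraph :: "'a set \<Rightarrow> 'a set set \<Rightarrow> nat \<Rightarrow> bool" where
  "has_k_edge_induced_subgraph V E k \<longleftrightarrow>
     (\<exists>S. S \<subseteq> V \<and> S \<noteq> {} \<and> card (induced_edges E S) = k)"

end

theory Submission
  imports Defs
begin

lemma card2_other: "card e = 2 \<Longrightarrow> a \<in> e \<Longrightarrow> \<exists>w. w \<noteq> a \<and> e = {a,w}"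
  by (auto simp: card_2_iff) 

lemma ind_finite: "finite Z \<Longrightarrow> finite (induced_edges E Z)"
  by (rule finite_subset[of _ "Pow Z"]) (auto simp: induced_edges_def)

lemma ind_empty: "simple_graph V E \<Longrightarrow> induced_edges E {} = {}"
  by (auto simp: induced_edges_def simple_graph_def)

lemma ind_single: "simple_graph V E \<Longrightarrow> induced_edges E {y} = {}"
proof -
  assume sg: "simple_graph V E"
  { fix e assume "e \<in> E" "e \<subseteq> {y}"
    hence "card e \<le> 1" using card_mono[of "{y}" e] by auto
    with sg \<open>e \<in> E\<close> have False by (auto simp: simple_graph_def) }
  thus ?thesis by (auto simp: induced_edges_def)
qed

lemma core:
  assumes sg: "simple_graph V E" and ind: "independent_set V E I"
  and Z: "Z \<inter> I = {}" and A: "A \<subseteq> I" "finite A" and fZ: "finite Z"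
  and q: "\<forall>a\<in>A. q a \<in> Z \<and> {a, q a} \<in> E"
  and uq: "\<forall>a\<in>A. \<forall>z\<in>Z. {a,z} \<in> E \<longrightarrow> z = q a"
  shows "card (induced_edges E (Z \<union> A)) = card (induced_edges E Z) + card A"
proof -
  define B where "B = (\<lambda>a. {a, q a}) ` A"
  have eq: "induced_edges E (Z \<union> A) = induced_edges E Z \<union> B"
  proof
    show "induced_edges E (Z \<union> A) \<subseteq> induced_edges E Z \<union> B"
    proof
      fix e assume e: "e \<in> induced_edges E (Z \<union> A)"
      show "e \<in> induced_edges E Z \<union> B"
      proof (cases "e \<subseteq> Z")
        case True thus ?thesis using e by (auto simp: induced_edges_def)
      next
        case False
        have eE: "e \<in> E" and eS: "e \<subseteq> Z \<union> A" using e by (simp_all add: induced_edges_def)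
        then obtain a where a: "a \<in> e" "a \<in> A" using False by blast
        have "card e = 2" using eE sg by (simp add: simple_graph_def)
        then obtain w where w: "w \<noteq> a" "e = {a,w}" using card2_other[OF _ a(1)] by blast
        have "w \<in> e" using w(2) by simp
        hence "w \<in> Z \<union> A" using eS by blast
        moreover have "w \<notin> A"
        proof
          assume "w \<in> A"
          hence "e \<subseteq> I" using w(2) a(2) A(1) by auto
          thus False using eE ind unfolding independent_set_def by blast
        qed
        ultimately have "w \<in> Z" by auto
        hence "w = q a" using uq a(2) w(2) eE by blast
        thus ?thesis using w a by (auto simp: B_def)
      qed
    qed
  next
    show "induced_edges E Z \<union> B \<subseteq> induced_edges E (Z \<union> A)"
      using q by (auto simp: induced_edges_def B_def)
  qed
  have disj: "induced_edges E Z \<inter> B = {}"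
    using A Z by (auto simp: induced_edges_def B_def)
  have inj: "inj_on (\<lambda>a. {a, q a}) A"
  proof (rule inj_onI)
    fix a b assume ab: "a \<in> A" "b \<in> A" "{a, q a} = {b, q b}"
    hence "a \<in> {b, q b}" by auto
    moreover have "a \<noteq> q b" using ab q A Z by auto
    ultimately show "a = b" by auto
  qed
  have "card B = card A" unfolding B_def using inj by (rule card_image)
  moreover have "finite B" using A by (auto simp: B_def)
  ultimately show ?thesis using eq disj ind_finite[OF fZ] by (simp add: card_Un_disjoint)
qed

lemma deg_bound:
  assumes sg: "simple_graph V E" and fZ: "finite Z" and z: "z \<in> Z"
  shows "card (induced_edges E Z) \<le> card (induced_edges E (Z - {z})) + card (Z - {z})"
proof -
  have "induced_edges E Z \<subseteq> induced_edges E (Z - {z}) \<union> (\<lambda>w. {z,w}) ` (Z - {z})"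
  proof
    fix e assume e: "e \<in> induced_edges E Z"
    show "e \<in> induced_edges E (Z - {z}) \<union> (\<lambda>w. {z,w}) ` (Z - {z})"
    proof (cases "z \<in> e")
      case False thus ?thesis using e by (auto simp: induced_edges_def)
    next
      case True
      have eE: "e \<in> E" and eS: "e \<subseteq> Z" using e by (simp_all add: induced_edges_def)
      have "card e = 2" using eE sg by (simp add: simple_graph_def)
      then obtain w where w: "w \<noteq> z" "e = {z,w}" using card2_other[OF _ True] by blast
      have "w \<in> Z" using w(2) eS by simp
      hence "e \<in> (\<lambda>w. {z,w}) ` (Z - {z})" using w by blast
      thus ?thesis by blast
    qed
  qed
  hence "card (induced_edges E Z) \<le> card (induced_edges E (Z - {z}) \<union> (\<lambda>w. {z,w}) ` (Z - {z}))"
    by (intro card_mono) (auto intro: ind_finite fZ)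
  also have "\<dots> \<le> card (induced_edges E (Z - {z})) + card ((\<lambda>w. {z,w}) ` (Z - {z}))"
    by (rule card_Un_le)
  also have "\<dots> \<le> card (induced_edges E (Z - {z})) + card (Z - {z})"
    using card_image_le[of "Z - {z}" "\<lambda>w. {z,w}"] fZ by auto
  finally show ?thesis .
qed

theorem lemma3p9:
  fixes V :: "'a set" and E :: "'a set set" and k :: nat
  assumes "simple_graph V E"
    and "k \<ge> 1"
    and "\<forall>v\<in>V. \<not> isolated E v"
    and "\<exists>I. independent_set V E I \<and> card I = (k - 1)^2 + 1"
  shows "has_k_edge_induced_subgraph V E k"
proof -
  note sg = assms(1)
  have fV: "finite V" using sg by (simp add: simple_graph_def)
  obtain I where ind: "independent_set V E I" and cI: "card I = (k - 1)^2 + 1"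
    using assms(4) by blast
  have IV: "I \<subseteq> V" using ind by (simp add: independent_set_def)
  have fI: "finite I" using IV fV finite_subset by blast
  define N where "N y = {x \<in> I. {x,y} \<in> E}" for y
  have nb: "\<exists>y\<in>V - I. {x,y} \<in> E" if x: "x \<in> I" for x
  proof -
    have "degree E x \<noteq> 0" using assms(3) x IV by (auto simp: isolated_def)
    hence "{e \<in> E. x \<in> e} \<noteq> {}" by (metis card.empty degree_def)
    then obtain e where e: "e \<in> E" "x \<in> e" by blast
    have "card e = 2" "e \<subseteq> V" using e sg by (auto simp: simple_graph_def)
    then obtain w where w: "w \<noteq> x" "e = {x,w}" using card2_other[OF _ e(2)] by blast
    have "w \<notin> I" using ind e w x by (auto simp: independent_set_def)
    thus ?thesis using w e \<open>e \<subseteq> V\<close> by auto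
  qed
  show ?thesis
  proof (cases "\<exists>y\<in>V - I. card (N y) \<ge> k")
    case True
    then obtain y where y: "y \<in> V - I" "card (N y) \<ge> k" by blast
    obtain A where A: "A \<subseteq> N y" "card A = k"
      using obtain_subset_with_card_n[OF y(2)] by blast
    have AI: "A \<subseteq> I" using A by (auto simp: N_def)
    have fA: "finite A" using AI fI finite_subset by blast
    have c: "card (induced_edges E ({y} \<union> A)) = card (induced_edges E {y}) + card A"
      apply (rule core[OF sg ind, where q = "\<lambda>_. y"])
      using y AI fA A by (auto simp: N_def insert_commute)
    show ?thesis unfolding has_k_edge_induced_subgraph_def
    proof (intro exI conjI)
      show "{y} \<union> A \<subseteq> V" using AI IV y by blast
      show "{y} \<union> A \<noteq> {}" by blast
      show "card (induced_edges E ({y} \<union> A)) = k" using c ind_single[OF sg] A(2) by simp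
    qed
  next
    case False
    have small: "\<forall>y\<in>V - I. card (N y) \<le> k - 1"
    proof
      fix y assume "y \<in> V - I"
      hence "\<not> k \<le> card (N y)" using False by blast
      thus "card (N y) \<le> k - 1" by simp
    qed
    define D where "D = {Y. Y \<subseteq> V - I \<and> (\<forall>x\<in>I. \<exists>y\<in>Y. {x,y} \<in> E)}"
    have "V - I \<in> D" using nb by (auto simp: D_def)
    then obtain Y where Y: "Y \<in> D" and Ymin: "\<forall>Y'. Y' \<in> D \<longrightarrow> card Y \<le> card Y'"
      using ex_has_least_nat[of "\<lambda>Y. Y \<in> D" "V - I" card] by blast
    have YV: "Y \<subseteq> V - I" and Ydom: "\<forall>x\<in>I. \<exists>y\<in>Y. {x,y} \<in> E" using Y by (auto simp: D_def)
    have fY: "finite Y" using YV fV finite_subset by blast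
    have priv: "\<forall>y\<in>Y. \<exists>x. x \<in> I \<and> {x,y} \<in> E \<and> (\<forall>y'\<in>Y. {x,y'} \<in> E \<longrightarrow> y' = y)"
    proof
      fix y assume y: "y \<in> Y"
      have "card (Y - {y}) < card Y" by (rule card_Diff1_less[OF fY y])
      hence "Y - {y} \<notin> D" using Ymin by force
      then obtain x where x: "x \<in> I" "\<forall>y'\<in>Y - {y}. {x,y'} \<notin> E" using YV by (auto simp: D_def)
      then obtain y0 where "y0 \<in> Y" "{x,y0} \<in> E" using Ydom by blast
      hence "y0 = y" using x by auto
      thus "\<exists>x. x \<in> I \<and> {x,y} \<in> E \<and> (\<forall>y'\<in>Y. {x,y'} \<in> E \<longrightarrow> y' = y)"
        using x \<open>{x,y0} \<in> E\<close> by blast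
    qed
    from bchoice[OF priv] obtain p where p: "\<forall>y\<in>Y. p y \<in> I \<and> {p y, y} \<in> E \<and> (\<forall>y'\<in>Y. {p y, y'} \<in> E \<longrightarrow> y' = y)"
      by blast
    have "I \<subseteq> (\<Union>y\<in>Y. N y)" using Ydom by (auto simp: N_def)
    moreover have fU: "finite (\<Union>y\<in>Y. N y)" using fY fI by (simp add: N_def)
    ultimately have "card I \<le> card (\<Union>y\<in>Y. N y)" by (simp add: card_mono)
    also have "\<dots> \<le> (\<Sum>y\<in>Y. card (N y))" by (rule card_UN_le[OF fY])
    also have "\<dots> \<le> (\<Sum>y\<in>Y. k - 1)" using small YV by (intro sum_mono) auto
    also have "\<dots> = card Y * (k - 1)" by simp
    finally have "(k-1)^2 + 1 \<le> card Y * (k - 1)" using cI by simp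
    hence kY: "k \<le> card Y"
    proof -
      assume h: "(k-1)^2 + 1 \<le> card Y * (k - 1)"
      show ?thesis
      proof (rule ccontr)
        assume "\<not> k \<le> card Y"
        hence "card Y \<le> k - 1" by simp
        hence m: "card Y * (k-1) \<le> (k-1) * (k-1)" by (rule mult_le_mono1)
        have "(k-1)^2 = (k-1)*(k-1)" by (simp add: power2_eq_square)
        thus False using h m by linarith
      qed
    qed
    define g where "g Z = card (induced_edges E Z) + card Z" for Z
    have "g Y \<ge> k" unfolding g_def using kY by linarith
    hence PY: "Y \<subseteq> Y \<and> g Y \<ge> k" by simp
    from ex_has_least_nat[of "\<lambda>Z. Z \<subseteq> Y \<and> g Z \<ge> k", OF PY, of card]
    obtain Z where Z0: "Z \<subseteq> Y \<and> g Z \<ge> k"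
      and Zmin: "\<forall>Z'. Z' \<subseteq> Y \<and> g Z' \<ge> k \<longrightarrow> card Z \<le> card Z'"
      by blast
    have Z: "Z \<subseteq> Y" "g Z \<ge> k" using Z0 by simp_all
    have fZ: "finite Z" by (rule finite_subset[OF Z(1) fY])
    have g0: "g {} = 0" using ind_empty[OF sg] by (simp add: g_def)
    have "Z \<noteq> {}"
    proof
      assume "Z = {}"
      thus False using g0 Z(2) assms(2) by simp
    qed
    then obtain z where z: "z \<in> Z" by blast
    have "card (Z - {z}) < card Z" by (rule card_Diff1_less[OF fZ z])
    have ng: "\<not> g (Z - {z}) \<ge> k"
    proof
      assume "g (Z - {z}) \<ge> k"
      moreover have "Z - {z} \<subseteq> Y" using Z(1) by blast
      ultimately have "card Z \<le> card (Z - {z})" using Zmin by blast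
      thus False using \<open>card (Z - {z}) < card Z\<close> by simp
    qed
    have lt: "card (induced_edges E Z) < k"
      using deg_bound[OF sg fZ z] ng unfolding g_def by linarith
    have "k - card (induced_edges E Z) \<le> card Z" using Z(2) unfolding g_def by linarith
    then obtain Z' where Z': "Z' \<subseteq> Z" "card Z' = k - card (induced_edges E Z)"
      by (rule obtain_subset_with_card_n)
    have fZ': "finite Z'" by (rule finite_subset[OF Z'(1) fZ])
    have injp: "inj_on p Z'"
    proof (rule inj_onI)
      fix a b assume ab: "a \<in> Z'" "b \<in> Z'" "p a = p b"
      hence "a \<in> Y" "b \<in> Y" using Z(1) Z'(1) by blast+
      have "{p a, a} \<in> E" using p \<open>a \<in> Y\<close> by blast
      hence "{p b, a} \<in> E" using ab(3) by simp
      thus "a = b" using p \<open>a \<in> Y\<close> \<open>b \<in> Y\<close> by blast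
    qed
    define A where "A = p ` Z'"
    have "Z' \<subseteq> Y" using Z(1) Z'(1) by blast
    hence AI: "A \<subseteq> I" using p unfolding A_def by blast
    have cA: "card A = card Z'" using injp by (simp add: A_def card_image)
    have c: "card (induced_edges E (Z \<union> A)) = card (induced_edges E Z) + card A"
    proof (rule core[OF sg ind, where q = "inv_into Z' p"])
      show "Z \<inter> I = {}" using Z(1) YV by blast
      show "A \<subseteq> I" by (rule AI)
      show "finite A" using fZ' by (simp add: A_def)
      show "finite Z" by (rule fZ)
      show "\<forall>a\<in>A. inv_into Z' p a \<in> Z \<and> {a, inv_into Z' p a} \<in> E"
      proof
        fix a assume "a \<in> A"
        then obtain z where z: "z \<in> Z'" "a = p z" unfolding A_def by blast
        have iz: "inv_into Z' p a = z" using z injp by (simp add: inv_into_f_f)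
        have "z \<in> Y" using z(1) Z(1) Z'(1) by blast
        hence "{p z, z} \<in> E" using p by blast
        moreover have "z \<in> Z" using z(1) Z'(1) by blast
        ultimately show "inv_into Z' p a \<in> Z \<and> {a, inv_into Z' p a} \<in> E"
          using iz z(2) by simp
      qed
      show "\<forall>a\<in>A. \<forall>z\<in>Z. {a, z} \<in> E \<longrightarrow> z = inv_into Z' p a"
      proof (intro ballI impI)
        fix a z' assume a: "a \<in> A" and z': "z' \<in> Z" "{a, z'} \<in> E"
        then obtain z where z: "z \<in> Z'" "a = p z" unfolding A_def by blast
        have iz: "inv_into Z' p a = z" using z injp by (simp add: inv_into_f_f)
        have "z \<in> Y" "z' \<in> Y" using z(1) z'(1) Z(1) Z'(1) by blast+
        moreover have "{p z, z'} \<in> E" using z'(2) z(2) by simp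
        ultimately have "z' = z" using p by blast
        thus "z' = inv_into Z' p a" using iz by simp
      qed
    qed
    show ?thesis unfolding has_k_edge_induced_subgraph_def
    proof (intro exI conjI)
      show "Z \<union> A \<subseteq> V" using Z(1) YV AI IV by blast
      show "Z \<union> A \<noteq> {}" using \<open>Z \<noteq> {}\<close> by blast
      show "card (induced_edges E (Z \<union> A)) = k" using c cA Z'(2) lt by simp
    qed
  qed
qed

end
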